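(* Let $N$ be an NFA, let $L_0$ be a forward-admissible initial partition of its vertex set, let $L$ be the partition output by the forward refinement algorithm started from $L_0$, and let $\sim$ be the equivalence relation whose classes are the sets of $L$. Then $\sim$ refines $\sim_{\mathrm{fwd}}$, i.e. $v\sim w$ implies $v\sim_{\mathrm{fwd}}w$.
   Context: An NFA $N$ over a finite alphabet $A$ consists of a finite vertex set $V$, a starting vertex $v_s\in V$, accepting action sets for the vertices, and a set of labeled edges $v\xrightarrow{\lambda}w$ with $v,w\in V$ and $\lambda\in A\cup\{\varepsilon\}$. For a vertex $u$ and a finite sequence $\tau=\tau_1\cdots\tau_r$ ($r\ge0$) with $\tau_i\in A\cup\{\varepsilon\}$, a vertex $w$ is reachable from $u$ on $\tau$ if there are vertices $u=v_1,\dots,v_{r+1}=w$ with an edge $v_i\xrightarrow{\tau_i}v_{i+1}$ for each $i$. Vertices $v_1,v_2$ are forward-equivalent, $v_1\sim_{\mathrm{fwd}}v_2$, if for every finite sequence $\tau$ over $A\cup\{\varepsilon\}$, $v_1$ is reachable from $v_s$ on $\tau$ iff $v_2$ is. A partition $L_0$ of $V$ is a forward-admissible initial partition if $\{v_s\}\in L_0$. Refining a partition $P$ of $V$ by a subset $Y\subseteq V$ means replacing $P$ by the nonempty sets among $\{B\cap Y, B\setminus Y : B\in P\}$. Forward refinement algorithm: given $L_i$, for each $Z\in L_i$ and each $\sigma\in A\cup\{\varepsilon\}$ let $Z[\sigma]=\{z\in V: z'\xrightarrow{\sigma}z\text{ for some }z'\in Z\}$; $L_{i+1}$ is obtained from $L_i$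 by refining successively by all these sets $Z[\sigma]$. Repeat until $L_{i+1}=L_i$ and output this converged partition $L$. *)

theory Defs
  imports Main
begin

text \<open>NFA labels: \<open>Some a\<close> is a letter a of the alphabet A, \<open>None\<close> is epsilon.
  Edges are triples (v, label, w).\<close>

definition is_partition :: "'v set \<Rightarrow> 'v set set \<Rightarrow> bool" where
  "is_partition V P \<longleftrightarrow> {} \<notin> P \<and> \<Union>P = V \<and>
     (\<forall>B\<in>P. \<forall>C\<in>P. B \<noteq> C \<longrightarrow> B \<inter> C = {})"

fun reach :: "('v \<times> 'a option \<times> 'v) set \<Rightarrow> 'v \<Rightarrow> 'a option list \<Rightarrow> 'v \<Rightarrow> bool" where
  "reach E u [] w \<longleftrightarrow> u = w"
| "reach E u (s # t) w \<longleftrightarrow> (\<exists>v. (u, s, v) \<in> E \<and> reach E v t w)"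

definition fwd_equiv ::
  "'a set \<Rightarrow> ('v \<times> 'a option \<times> 'v) set \<Rightarrow> 'v \<Rightarrow> 'v \<Rightarrow> 'v \<Rightarrow> bool" where
  "fwd_equiv A E vs v1 v2 \<longleftrightarrow>
     (\<forall>t. set t \<subseteq> insert None (Some ` A) \<longrightarrow> (reach E vs t v1 \<longleftrightarrow> reach E vs t v2))"

definition refine_by :: "'v set set \<Rightarrow> 'v set \<Rightarrow> 'v set set" where
  "refine_by P Y = ({B \<inter> Y | B. B \<in> P} \<union> {B - Y | B. B \<in> P}) - {{}}"

definition succ_set :: "('v \<times> 'a option \<times> 'v) set \<Rightarrow> 'v set \<Rightarrow> 'a option \<Rightarrow> 'v set" where
  "succ_set E Z s = {z. \<exists>z'\<in>Z. (z', s, z) \<in> E}"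

definition fwd_step ::
  "'a set \<Rightarrow> ('v \<times> 'a option \<times> 'v) set \<Rightarrow> 'v set set \<Rightarrow> 'v set set" where
  "fwd_step A E L = foldl refine_by L
     (SOME ys. set ys = {succ_set E Z s | Z s. Z \<in> L \<and> s \<in> insert None (Some ` A)})"

definition fwd_refine ::
  "'a set \<Rightarrow> ('v \<times> 'a option \<times> 'v) set \<Rightarrow> 'v set set \<Rightarrow> 'v set set" where
  "fwd_refine A E L0 =
     (fwd_step A E ^^ (LEAST k. fwd_step A E ((fwd_step A E ^^ k) L0) = (fwd_step A E ^^ k) L0)) L0"

end

theory Submission
  imports Defs
begin

lemma refine_sub: "C \<in> refine_by P Y \<Longrightarrow> \<exists>B\<in>P. C \<subseteq> B"
  unfolding refine_by_def by blast

lemma foldl_sub: "C \<in> foldl refine_by P ys \<Longrightarrow> \<exists>B\<in>P. C \<subseteq> B"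
proof (induction ys arbitrary: P)
  case Nil then show ?case by auto
next
  case (Cons y ys)
  from Cons.IH[of "refine_by P y"] Cons.prems obtain B where "B \<in> refine_by P y" "C \<subseteq> B" by auto
  then show ?case using refine_sub[of B P y] by blast
qed

lemma refine_good: "C \<in> refine_by P Y \<Longrightarrow> C \<subseteq> Y \<or> C \<inter> Y = {}"
  unfolding refine_by_def by blast

lemma foldl_good: "Y \<in> set ys \<Longrightarrow> C \<in> foldl refine_by P ys \<Longrightarrow> C \<subseteq> Y \<or> C \<inter> Y = {}"
proof (induction ys arbitrary: P)
  case Nil then show ?case by auto
next
  case (Cons y ys)
  show ?case
  proof (cases "Y \<in> set ys")
    case True then show ?thesis using Cons.IH[of "refine_by P y"] Cons.prems by simp
  next
    case False
    then have "Y = y" using Cons.prems by auto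
    from Cons.prems(2) obtain B where "B \<in> refine_by P y" "C \<subseteq> B"
      using foldl_sub[of C "refine_by P y" ys] by auto
    then show ?thesis using refine_good[of B P y] \<open>Y = y\<close> by blast
  qed
qed

lemma refine_part: "is_partition V P \<Longrightarrow> is_partition V (refine_by P Y)"
proof -
  assume p: "is_partition V P"
  have a: "{} \<notin> refine_by P Y" unfolding refine_by_def by simp
  have b: "\<Union>(refine_by P Y) = V"
  proof
    show "\<Union>(refine_by P Y) \<subseteq> V" using p unfolding refine_by_def is_partition_def by auto
  next
    show "V \<subseteq> \<Union>(refine_by P Y)"
    proof
      fix x assume "x \<in> V"
      then obtain B where B: "B \<in> P" "x \<in> B" using p unfolding is_partition_def by auto
      show "x \<in> \<Union>(refine_by P Y)"
      proof (cases "x \<in> Y")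
        case True
        then have "B \<inter> Y \<in> refine_by P Y" using B unfolding refine_by_def by auto
        then show ?thesis using B True by blast
      next
        case False
        then have "B - Y \<in> refine_by P Y" using B unfolding refine_by_def by auto
        then show ?thesis using B False by blast
      qed
    qed
  qed
  have d: "\<forall>C\<in>refine_by P Y. \<forall>D\<in>refine_by P Y. C \<noteq> D \<longrightarrow> C \<inter> D = {}"
  proof (intro ballI impI)
    fix C D assume C: "C \<in> refine_by P Y" and D: "D \<in> refine_by P Y" and ne: "C \<noteq> D"
    from C obtain B where B: "B \<in> P" "C = B \<inter> Y \<or> C = B - Y" unfolding refine_by_def by auto
    from D obtain B' where B': "B' \<in> P" "D = B' \<inter> Y \<or> D = B' - Y" unfolding refine_by_def by auto
    show "C \<inter> D = {}"
    proof (cases "B = B'")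
      case True then show ?thesis using B B' ne by auto
    next
      case False
      then have "B \<inter> B' = {}" using p B B' unfolding is_partition_def by auto
      then show ?thesis using B B' by auto
    qed
  qed
  show ?thesis using a b d unfolding is_partition_def by blast
qed


lemma foldl_part: "is_partition V P \<Longrightarrow> is_partition V (foldl refine_by P ys)"
  by (induction ys arbitrary: P) (auto intro: refine_part)

abbreviation lab :: "'a set \<Rightarrow> 'a option set" where "lab A \<equiv> insert None (Some ` A)"

lemma part_finite: "is_partition V L \<Longrightarrow> finite V \<Longrightarrow> finite L"
proof -
  assume "is_partition V L" "finite V"
  then have "L \<subseteq> Pow V" unfolding is_partition_def by blast
  then show "finite L" using \<open>finite V\<close> finite_subset by blast
qed

lemma succs_finite:
  assumes "finite L" "finite A"
  shows "finite {succ_set E Z s | Z s. Z \<in> L \<and> s \<in> lab A}"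
proof -
  have "{succ_set E Z s | Z s. Z \<in> L \<and> s \<in> lab A} = (\<lambda>(Z,s). succ_set E Z s) ` (L \<times> lab A)"
    by auto
  then show ?thesis using assms by simp
qed

lemma step_sub: "C \<in> fwd_step A E L \<Longrightarrow> \<exists>B\<in>L. C \<subseteq> B"
  unfolding fwd_step_def by (rule foldl_sub)

lemma step_part: "is_partition V L \<Longrightarrow> is_partition V (fwd_step A E L)"
  unfolding fwd_step_def by (rule foldl_part)

lemma step_fixed_good:
  assumes "fwd_step A E L = L" "finite V" "finite A" "is_partition V L"
    and "Z \<in> L" "s \<in> lab A" "B \<in> L"
  shows "B \<subseteq> succ_set E Z s \<or> B \<inter> succ_set E Z s = {}"
proof -
  let ?S = "{succ_set E Z s | Z s. Z \<in> L \<and> s \<in> lab A}"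
  have "finite ?S" using succs_finite part_finite assms by blast
  then have "\<exists>ys. set ys = ?S" using finite_list by blast
  then have hs: "set (SOME ys. set ys = ?S) = ?S" by (rule someI_ex)
  have "B \<in> foldl refine_by L (SOME ys. set ys = ?S)"
    using assms(1,7) unfolding fwd_step_def by simp
  moreover have "succ_set E Z s \<in> set (SOME ys. set ys = ?S)" using hs assms by blast
  ultimately show ?thesis using foldl_good by blast
qed

lemma part_disj: "is_partition V P \<Longrightarrow> B \<in> P \<Longrightarrow> C \<in> P \<Longrightarrow> x \<in> B \<Longrightarrow> x \<in> C \<Longrightarrow> B = C"
  unfolding is_partition_def by auto
lemma part_ne: "is_partition V P \<Longrightarrow> B \<in> P \<Longrightarrow> \<exists>x. x \<in> B"
  unfolding is_partition_def by (metis ex_in_conv)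
lemma part_cover: "is_partition V P \<Longrightarrow> x \<in> V \<Longrightarrow> \<exists>B\<in>P. x \<in> B"
  unfolding is_partition_def by auto
lemma part_subV: "is_partition V P \<Longrightarrow> B \<in> P \<Longrightarrow> B \<subseteq> V"
  unfolding is_partition_def by auto

definition R :: "'v set set \<Rightarrow> ('v \<times> 'v) set" where
  "R P = {(x,y). \<exists>B\<in>P. x \<in> B \<and> y \<in> B}"

lemma R_mono: "(\<And>C. C \<in> Q \<Longrightarrow> \<exists>B\<in>P. C \<subseteq> B) \<Longrightarrow> R Q \<subseteq> R P"
proof
  fix p assume h: "\<And>C. C \<in> Q \<Longrightarrow> \<exists>B\<in>P. C \<subseteq> B" and p: "p \<in> R Q"
  obtain x y where xy: "p = (x,y)" by (cases p)
  from p xy obtain C where C: "C \<in> Q" "x \<in> C" "y \<in> C" unfolding R_def by auto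
  from h[OF C(1)] obtain B where "B \<in> P" "C \<subseteq> B" by auto
  then show "p \<in> R P" using C xy unfolding R_def by auto
qed

lemma R_sub: "is_partition V P \<Longrightarrow> R P \<subseteq> V \<times> V"
proof
  fix p assume h: "is_partition V P" and p: "p \<in> R P"
  obtain x y where xy: "p = (x,y)" by (cases p)
  from p xy obtain C where C: "C \<in> P" "x \<in> C" "y \<in> C" unfolding R_def by auto
  then show "p \<in> V \<times> V" using part_subV[OF h C(1)] xy by auto
qed

lemma R_eq:
  assumes "is_partition V P" "is_partition V Q" "\<And>C. C \<in> Q \<Longrightarrow> \<exists>B\<in>P. C \<subseteq> B"
    and "R Q = R P"
  shows "Q = P"
proof -
  have QP: "C \<in> P" if "C \<in> Q" for C
  proof -
    obtain x where x: "x \<in> C" using part_ne[OF assms(2) \<open>C \<in> Q\<close>] by blast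
    obtain B where B: "B \<in> P" "C \<subseteq> B" using assms(3)[OF \<open>C \<in> Q\<close>] by blast
    have "B \<subseteq> C"
    proof
      fix y assume "y \<in> B"
      then have "(x,y) \<in> R P" using B x unfolding R_def by blast
      then have "(x,y) \<in> R Q" using assms(4) by simp
      then obtain C' where "C' \<in> Q" "x \<in> C'" "y \<in> C'" unfolding R_def by blast
      then have "C' = C" using part_disj[OF assms(2) _ \<open>C \<in> Q\<close>] x by blast
      then show "y \<in> C" using \<open>y \<in> C'\<close> by simp
    qed
    then show ?thesis using B by auto
  qed
  moreover have "B \<in> Q" if "B \<in> P" for B
  proof -
    obtain x where x: "x \<in> B" using part_ne[OF assms(1) \<open>B \<in> P\<close>] by blast
    then have "x \<in> V" using part_subV[OF assms(1) \<open>B \<in> P\<close>] by blast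
    then obtain C where C: "C \<in> Q" "x \<in> C" using part_cover[OF assms(2)] by blast
    then have "C \<in> P" using QP by blast
    then have "C = B" using part_disj[OF assms(1) _ \<open>B \<in> P\<close>] x C by blast
    then show ?thesis using C by simp
  qed
  ultimately show ?thesis by (intro set_eqI iffI) auto
qed

lemma iter_props:
  assumes "is_partition V L0"
  shows "is_partition V ((fwd_step A E ^^ k) L0) \<and>
    (\<forall>C\<in>(fwd_step A E ^^ k) L0. \<exists>B\<in>L0. C \<subseteq> B)"
proof (induction k)
  case 0 show ?case using assms by (simp; blast)
next
  case (Suc k)
  have p: "is_partition V ((fwd_step A E ^^ k) L0)" using Suc.IH by (rule conjunct1)
  have s: "\<forall>C\<in>(fwd_step A E ^^ k) L0. \<exists>B\<in>L0. C \<subseteq> B" using Suc.IH by (rule conjunct2)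
  have eq: "(fwd_step A E ^^ Suc k) L0 = fwd_step A E ((fwd_step A E ^^ k) L0)" by simp
  have "is_partition V ((fwd_step A E ^^ Suc k) L0)" unfolding eq by (rule step_part[OF p])
  moreover have "\<forall>C\<in>(fwd_step A E ^^ Suc k) L0. \<exists>B\<in>L0. C \<subseteq> B"
    unfolding eq
  proof
    fix C assume "C \<in> fwd_step A E ((fwd_step A E ^^ k) L0)"
    then obtain D where D: "D \<in> (fwd_step A E ^^ k) L0" "C \<subseteq> D" using step_sub by blast
    obtain B where "B \<in> L0" "D \<subseteq> B" using s D(1) by blast
    then show "\<exists>B\<in>L0. C \<subseteq> B" using D(2) by blast
  qed
  ultimately show ?case by (rule conjI)
qed

lemma fixpoint_exists:
  assumes "is_partition V L0" "finite V"
  shows "\<exists>k. fwd_step A E ((fwd_step A E ^^ k) L0) = (fwd_step A E ^^ k) L0"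
proof (rule ccontr)
  assume nex: "\<not> ?thesis"
  let ?P = "\<lambda>k. (fwd_step A E ^^ k) L0"
  have fin: "finite (R (?P k))" for k
  proof -
    have "is_partition V (?P k)" using iter_props[OF assms(1)] by blast
    then have "R (?P k) \<subseteq> V \<times> V" by (rule R_sub)
    moreover have "finite (V \<times> V)" using assms(2) by simp
    ultimately show ?thesis by (rule finite_subset)
  qed
  have strict: "R (?P (Suc k)) \<subset> R (?P k)" for k
  proof -
    have p1: "is_partition V (?P k)" using iter_props[OF assms(1)] by blast
    have eq: "?P (Suc k) = fwd_step A E (?P k)" by simp
    have p2: "is_partition V (?P (Suc k))" unfolding eq by (rule step_part[OF p1])
    have sub: "\<And>C. C \<in> ?P (Suc k) \<Longrightarrow> \<exists>B\<in>?P k. C \<subseteq> B" unfolding eq by (rule step_sub)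
    have "R (?P (Suc k)) \<subseteq> R (?P k)" by (rule R_mono[OF sub])
    moreover have "R (?P (Suc k)) \<noteq> R (?P k)"
    proof
      assume "R (?P (Suc k)) = R (?P k)"
      then have "?P (Suc k) = ?P k"
      proof (rule R_eq[OF p1 p2, rotated])
        fix C assume "C \<in> ?P (Suc k)" then show "\<exists>B\<in>?P k. C \<subseteq> B" by (rule sub)
      qed
      then have "fwd_step A E (?P k) = ?P k" unfolding eq .
      then show False using nex by blast
    qed
    ultimately show ?thesis by blast
  qed
  have "card (R (?P k)) + k \<le> card (R (?P 0))" for k
  proof (induction k)
    case 0 then show ?case by simp
  next
    case (Suc k)
    have "card (R (?P (Suc k))) < card (R (?P k))" using psubset_card_mono[OF fin strict] .
    then show ?case using Suc by simp
  qed
  from this[of "Suc (card (R (?P 0)))"] show False by simp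
qed

theorem mainTheorem7:
  fixes V :: "'v set" and A :: "'a set" and vs :: 'v
    and E :: "('v \<times> 'a option \<times> 'v) set" and L0 :: "'v set set"
  assumes "finite V" and "finite A" and "vs \<in> V"
    and "E \<subseteq> V \<times> insert None (Some ` A) \<times> V"
    and "is_partition V L0" and "{vs} \<in> L0"
  shows "\<forall>v w. (\<exists>B\<in>fwd_refine A E L0. v \<in> B \<and> w \<in> B) \<longrightarrow> fwd_equiv A E vs v w"
proof -
  let ?P = "\<lambda>k. (fwd_step A E ^^ k) L0"
  define k where "k = (LEAST k. fwd_step A E (?P k) = ?P k)"
  have hfix: "fwd_step A E (?P k) = ?P k"
    unfolding k_def using fixpoint_exists[OF assms(5,1)] by (rule LeastI_ex)
  define L where "L = fwd_refine A E L0"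
  have LP: "L = ?P k" unfolding L_def fwd_refine_def k_def by simp
  have part: "is_partition V L" and subL0: "\<forall>C\<in>L. \<exists>B\<in>L0. C \<subseteq> B"
    using iter_props[OF assms(5), of k A E] unfolding LP by auto
  have fixL: "fwd_step A E L = L" using hfix LP by simp
  define sat where "sat X \<longleftrightarrow> (\<forall>B\<in>L. B \<inter> X \<noteq> {} \<longrightarrow> B \<subseteq> X)" for X
  have succ_sat: "sat (succ_set E X s)" if "sat X" "s \<in> lab A" for X s
    unfolding sat_def
  proof (intro ballI impI)
    fix B assume B: "B \<in> L" "B \<inter> succ_set E X s \<noteq> {}"
    then obtain z z' where z: "z \<in> B" "z' \<in> X" "(z', s, z) \<in> E"
      unfolding succ_set_def by blast
    then have "z' \<in> V" using assms(4) by blast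
    then obtain Z where Z: "Z \<in> L" "z' \<in> Z" using part_cover[OF part] by blast
    then have "Z \<subseteq> X" using that(1) z unfolding sat_def by blast
    have "z \<in> succ_set E Z s" using Z z unfolding succ_set_def by blast
    then have "B \<subseteq> succ_set E Z s"
      using step_fixed_good[OF fixL assms(1,2) part Z(1) that(2) B(1)] z by blast
    also have "\<dots> \<subseteq> succ_set E X s" using \<open>Z \<subseteq> X\<close> unfolding succ_set_def by blast
    finally show "B \<subseteq> succ_set E X s" .
  qed
  have reach_sat: "sat {w. \<exists>u\<in>X. reach E u t w}" if "sat X" "set t \<subseteq> lab A" for X t
    using that
  proof (induction t arbitrary: X)
    case Nil then show ?case by simp
  next
    case (Cons s t)
    have eq: "{w. \<exists>u\<in>X. reach E u (s#t) w} = {w. \<exists>u\<in>succ_set E X s. reach E u t w}"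
      unfolding succ_set_def by auto
    show ?case unfolding eq using Cons succ_sat by simp
  qed
  have vsblock: "{vs} \<in> L"
  proof -
    obtain B where B: "B \<in> L" "vs \<in> B" using part_cover[OF part assms(3)] by blast
    then obtain B0 where "B0 \<in> L0" "B \<subseteq> B0" using subL0 by blast
    then have "B0 = {vs}" using part_disj[OF assms(5) \<open>B0 \<in> L0\<close> assms(6), of vs] B \<open>B \<subseteq> B0\<close> by blast
    then have "B = {vs}" using B \<open>B \<subseteq> B0\<close> by auto
    then show ?thesis using B(1) by simp
  qed
  have satvs: "sat {vs}" unfolding sat_def
  proof (intro ballI impI)
    fix B assume "B \<in> L" "B \<inter> {vs} \<noteq> {}"
    then have "B = {vs}" using part_disj[OF part _ vsblock, of B vs] by blast
    then show "B \<subseteq> {vs}" by simp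
  qed
  show ?thesis
  proof (intro allI impI)
    fix v w assume "\<exists>B\<in>fwd_refine A E L0. v \<in> B \<and> w \<in> B"
    then obtain B where B: "B \<in> L" "v \<in> B" "w \<in> B" unfolding L_def by blast
    show "fwd_equiv A E vs v w" unfolding fwd_equiv_def
    proof (intro allI impI)
      fix t assume t: "set t \<subseteq> lab A"
      have s: "sat {x. \<exists>u\<in>{vs}. reach E u t x}" by (rule reach_sat[OF satvs t])
      show "reach E vs t v = reach E vs t w"
        using s B unfolding sat_def by blast
    qed
  qed
qed

end
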